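(* Let $T$ be a decomposition tree of a distance-hereditary graph $G$, and let $v$ be an internal node of $T$ labeled $\odot$ with left child $v_l$ and right child $v_r$, such that property (P) holds at $v_l$ and at $v_r$. Then $\hat\alpha(v)=\hat\alpha(v_l)+\hat\alpha(v_r)$.
   Context: All graphs are finite, simple, undirected. For a graph $H$ and $S\subseteq V(H)$, $N_H[S]$ is $S$ together with all vertices adjacent to a vertex of $S$, and $H[S]$ is the induced subgraph. Graphs carry a "twin set": a single-vertex graph on $x$ has twin set $\{x\}$. For vertex-disjoint graphs $G_l,G_r$ with twin sets $TS(G_l),TS(G_r)$: the true twin operation $G_l\otimes G_r$ has vertex set $V(G_l)\cup V(G_r)$, edge set $E(G_l)\cup E(G_r)\cup\{uw: u\in TS(G_l), w\in TS(G_r)\}$ and twin set $TS(G_l)\cup TS(G_r)$; the false twin operation $G_l\odot G_r$ has vertex set $V(G_l)\cup V(G_r)$, edge set $E(G_l)\cup E(G_r)$, twin set $TS(G_l)\cup TS(G_r)$; the attachment operation $G_l\oplus G_r$ has the same vertex and edge sets as $G_l\otimes G_r$ and twin set $TS(G_l)$. A decomposition tree $T$ of $G$ is a rooted binary tree whose leaves are in bijection with $V(G)$, each internal node having a left and a right child and a label in $\{\otimes,\odot,\oplus\}$; for each node $v$ define $\hat G(v)$ and $\hat{TS}(v)$ recursively: for a leaf $x$, the single-vertex graph on $x$ with twin set $\{x\}$; for an internal node $v$ with label $\circ$ and children $v_l,v_r$, $\hat G(v)=\hat G(v_l)\circ\hat G(v_r)$ with the corresponding twin set; one requires $\hat G(\text{root})=G$.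 Then $\hat G(v)$ is the subgraph of $G$ induced by the set $\hat V(v)$ of leaves below $v$. For a node $u$ and $0\le k\le|\hat{TS}(u)|$, call $S\subseteq\hat V(u)$ $k$-feasible if $\hat V(u)\setminus\hat{TS}(u)\subseteq N_{\hat G(u)}[S]$ and there is $X\subseteq S\cap\hat{TS}(u)$ with $|X|=k$ such that $\hat G(u)[S\setminus X]$ has a perfect matching. $\hat\gamma_k(u)$ is the minimum size of a $k$-feasible set. $\hat{min}(u)=\min\{\hat\gamma_k(u):0\le k\le|\hat{TS}(u)|\}$, and $\hat\alpha(u)$, $\hat\beta(u)$ are the smallest and the largest $k$ with $\hat\gamma_k(u)=\hat{min}(u)$. Property (P) holds at $u$ if for every $0\le k\le|\hat{TS}(u)|$: $\hat\gamma_k(u)=\hat{min}(u)+\hat\alpha(u)-k$ when $k\le\hat\alpha(u)$; $\hat\gamma_k(u)=\hat{min}(u)+k-\hat\beta(u)$ when $k\ge\hat\beta(u)$; $\hat\gamma_k(u)=\hat{min}(u)$ when $\hat\alpha(u)<k<\hat\beta(u)$ and $k-\hat\alpha(u)$ is even; and $\hat\gamma_k(u)=\hat{min}(u)+1$ otherwise. *)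

theory Defs
  imports Main
begin

definition simple_graph :: "'a set \<Rightarrow> 'a set set \<Rightarrow> bool" where
  "simple_graph V E \<longleftrightarrow> finite V \<and> (\<forall>e\<in>E. \<exists>u w. u \<noteq> w \<and> u \<in> V \<and> w \<in> V \<and> e = {u, w})"

fun walk_in :: "'a set set \<Rightarrow> 'a set \<Rightarrow> 'a list \<Rightarrow> bool" where
  "walk_in E S [] = False"
| "walk_in E S [x] = (x \<in> S)"
| "walk_in E S (x # y # xs) = (x \<in> S \<and> {x, y} \<in> E \<and> walk_in E S (y # xs))"

definition connected_in :: "'a set set \<Rightarrow> 'a set \<Rightarrow> bool" where
  "connected_in E S \<longleftrightarrow> (\<forall>u\<in>S. \<forall>w\<in>S. \<exists>xs. walk_in E S xs \<and> hd xs = u \<and> last xs = w)"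

definition dist_in :: "'a set set \<Rightarrow> 'a set \<Rightarrow> 'a \<Rightarrow> 'a \<Rightarrow> nat" where
  "dist_in E S u w = (LEAST n. \<exists>xs. walk_in E S xs \<and> hd xs = u \<and> last xs = w \<and> length xs = Suc n)"

definition distance_hereditary :: "'a set \<Rightarrow> 'a set set \<Rightarrow> bool" where
  "distance_hereditary V E \<longleftrightarrow> simple_graph V E \<and>
     (\<forall>S \<subseteq> V. connected_in E S \<longrightarrow> (\<forall>u\<in>S. \<forall>w\<in>S. dist_in E S u w = dist_in E V u w))"

datatype lab = TrueTwin | FalseTwin | Attach

datatype 'a dtree = Leaf 'a | Node lab "'a dtree" "'a dtree"

fun tV :: "'a dtree \<Rightarrow> 'a set" where
  "tV (Leaf x) = {x}"
| "tV (Node _ l r) = tV l \<union> tV r"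

fun tTS :: "'a dtree \<Rightarrow> 'a set" where
  "tTS (Leaf x) = {x}"
| "tTS (Node TrueTwin l r) = tTS l \<union> tTS r"
| "tTS (Node FalseTwin l r) = tTS l \<union> tTS r"
| "tTS (Node Attach l r) = tTS l"

fun tE :: "'a dtree \<Rightarrow> 'a set set" where
  "tE (Leaf x) = {}"
| "tE (Node TrueTwin l r) = tE l \<union> tE r \<union> {{u, w} | u w. u \<in> tTS l \<and> w \<in> tTS r}"
| "tE (Node FalseTwin l r) = tE l \<union> tE r"
| "tE (Node Attach l r) = tE l \<union> tE r \<union> {{u, w} | u w. u \<in> tTS l \<and> w \<in> tTS r}"

fun distinct_leaves :: "'a dtree \<Rightarrow> bool" where
  "distinct_leaves (Leaf x) = True"
| "distinct_leaves (Node _ l r) = (distinct_leaves l \<and> distinct_leaves r \<and> tV l \<inter> tV r = {})"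

fun subtrees :: "'a dtree \<Rightarrow> 'a dtree set" where
  "subtrees (Leaf x) = {Leaf x}"
| "subtrees (Node c l r) = insert (Node c l r) (subtrees l \<union> subtrees r)"

definition decomposition_tree :: "'a dtree \<Rightarrow> 'a set \<Rightarrow> 'a set set \<Rightarrow> bool" where
  "decomposition_tree T V E \<longleftrightarrow> distinct_leaves T \<and> tV T = V \<and> tE T = E"

definition closed_nbhd :: "'a set set \<Rightarrow> 'a set \<Rightarrow> 'a set" where
  "closed_nbhd E S = S \<union> {w. \<exists>u\<in>S. {u, w} \<in> E}"

definition induced_edges :: "'a set set \<Rightarrow> 'a set \<Rightarrow> 'a set set" where
  "induced_edges E S = {e \<in> E. e \<subseteq> S}"

definition has_perfect_matching :: "'a set \<Rightarrow> 'a set set \<Rightarrow> bool" where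
  "has_perfect_matching S F \<longleftrightarrow> (\<exists>M \<subseteq> F. (\<forall>e\<in>M. \<forall>e'\<in>M. e \<noteq> e' \<longrightarrow> e \<inter> e' = {}) \<and> \<Union>M = S)"

definition k_feasible :: "'a dtree \<Rightarrow> nat \<Rightarrow> 'a set \<Rightarrow> bool" where
  "k_feasible u k S \<longleftrightarrow> S \<subseteq> tV u \<and> tV u - tTS u \<subseteq> closed_nbhd (tE u) S \<and>
     (\<exists>X. X \<subseteq> S \<inter> tTS u \<and> card X = k \<and>
          has_perfect_matching (S - X) (induced_edges (tE u) (S - X)))"

definition hgamma :: "'a dtree \<Rightarrow> nat \<Rightarrow> nat" where
  "hgamma u k = (LEAST n. \<exists>S. k_feasible u k S \<and> card S = n)"

definition hmin :: "'a dtree \<Rightarrow> nat" where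
  "hmin u = Min (hgamma u ` {0..card (tTS u)})"

definition halpha :: "'a dtree \<Rightarrow> nat" where
  "halpha u = Min {k. k \<le> card (tTS u) \<and> hgamma u k = hmin u}"

definition hbeta :: "'a dtree \<Rightarrow> nat" where
  "hbeta u = Max {k. k \<le> card (tTS u) \<and> hgamma u k = hmin u}"

definition propP :: "'a dtree \<Rightarrow> bool" where
  "propP u \<longleftrightarrow> (\<forall>k \<le> card (tTS u).
     (k \<le> halpha u \<longrightarrow> hgamma u k = hmin u + halpha u - k) \<and>
     (k \<ge> hbeta u \<longrightarrow> hgamma u k = hmin u + k - hbeta u) \<and>
     (halpha u < k \<and> k < hbeta u \<and> even (k - halpha u) \<longrightarrow> hgamma u k = hmin u) \<and>
     (halpha u < k \<and> k < hbeta u \<and> odd (k - halpha u) \<longrightarrow> hgamma u k = hmin u + 1))"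

end

theory Submission
  imports Defs
begin

definition feasw :: "'a set \<Rightarrow> 'a set \<Rightarrow> 'a set set \<Rightarrow> nat \<Rightarrow> 'a set \<Rightarrow> 'a set \<Rightarrow> 'a set set \<Rightarrow> bool" where
  "feasw V TS E k S X M \<longleftrightarrow> S \<subseteq> V \<and> V - TS \<subseteq> closed_nbhd E S \<and> X \<subseteq> S \<inter> TS \<and> card X = k
     \<and> M \<subseteq> induced_edges E (S - X) \<and> (\<forall>e\<in>M. \<forall>e'\<in>M. e \<noteq> e' \<longrightarrow> e \<inter> e' = {}) \<and> \<Union>M = S - X"

lemma kf_iff: "k_feasible u k S \<longleftrightarrow> (\<exists>X M. feasw (tV u) (tTS u) (tE u) k S X M)"
  unfolding k_feasible_def feasw_def has_perfect_matching_def by auto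

lemma finite_tV: "finite (tV u)"
  by (induction u) auto

lemma tTS_sub: "tTS u \<subseteq> tV u"
  by (induction u rule: tTS.induct) auto

lemma tTS_ne: "tTS u \<noteq> {}"
  by (induction u rule: tTS.induct) auto

lemma tE_sub: "e \<in> tE u \<Longrightarrow> e \<subseteq> tV u"
proof (induction u arbitrary: e rule: tE.induct)
  case (2 l r) then show ?case using tTS_sub[of l] tTS_sub[of r] by auto
next
  case (4 l r) then show ?case using tTS_sub[of l] tTS_sub[of r] by auto
qed auto

lemma closed_mono: "E \<subseteq> E' \<Longrightarrow> S \<subseteq> S' \<Longrightarrow> closed_nbhd E S \<subseteq> closed_nbhd E' S'"
  unfolding closed_nbhd_def by blast

lemma feasw_combine:
  assumes l: "feasw Vl TSl El kl Sl Xl Ml" and r: "feasw Vr TSr Er kr Sr Xr Mr"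
    and d: "Vl \<inter> Vr = {}" and fl: "finite Vl" and fr: "finite Vr" and E: "El \<union> Er \<subseteq> E"
  shows "feasw (Vl \<union> Vr) (TSl \<union> TSr) E (kl+kr) (Sl \<union> Sr) (Xl \<union> Xr) (Ml \<union> Mr)"
proof -
  from l have l1: "Sl \<subseteq> Vl" "Vl - TSl \<subseteq> closed_nbhd El Sl" "Xl \<subseteq> Sl \<inter> TSl" "card Xl = kl"
     "Ml \<subseteq> induced_edges El (Sl - Xl)" "(\<forall>e\<in>Ml. \<forall>e'\<in>Ml. e \<noteq> e' \<longrightarrow> e \<inter> e' = {})" "\<Union>Ml = Sl - Xl"
    unfolding feasw_def by auto
  from r have r1: "Sr \<subseteq> Vr" "Vr - TSr \<subseteq> closed_nbhd Er Sr" "Xr \<subseteq> Sr \<inter> TSr" "card Xr = kr"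
     "Mr \<subseteq> induced_edges Er (Sr - Xr)" "(\<forall>e\<in>Mr. \<forall>e'\<in>Mr. e \<noteq> e' \<longrightarrow> e \<inter> e' = {})" "\<Union>Mr = Sr - Xr"
    unfolding feasw_def by auto
  have c1: "closed_nbhd El Sl \<subseteq> closed_nbhd E (Sl \<union> Sr)" "closed_nbhd Er Sr \<subseteq> closed_nbhd E (Sl \<union> Sr)"
    using closed_mono[of El E Sl "Sl \<union> Sr"] closed_mono[of Er E Sr "Sl \<union> Sr"] E by auto
  have "Xl \<subseteq> Vl" "Xr \<subseteq> Vr" using l1(1,3) r1(1,3) by blast+
  then have fx: "finite Xl" "finite Xr" using finite_subset fl fr by auto
  have dX: "Xl \<inter> Xr = {}" using l1(1,3) r1(1,3) d by blast
  have cx: "card (Xl \<union> Xr) = kl + kr"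
    using card_Un_disjoint[OF fx dX] l1(4) r1(4) by simp
  have XS: "Xr \<inter> Sl = {}" "Xl \<inter> Sr = {}" using l1(1,3) r1(1,3) d by blast+
  have m: "Ml \<union> Mr \<subseteq> induced_edges E ((Sl \<union> Sr) - (Xl \<union> Xr))"
  proof
    fix e assume e: "e \<in> Ml \<union> Mr"
    show "e \<in> induced_edges E ((Sl \<union> Sr) - (Xl \<union> Xr))"
    proof (cases "e \<in> Ml")
      case True
      then have "e \<in> El" "e \<subseteq> Sl - Xl" using l1(5) unfolding induced_edges_def by auto
      then show ?thesis using E XS unfolding induced_edges_def by auto
    next
      case False
      then have "e \<in> Mr" using e by simp
      then have "e \<in> Er" "e \<subseteq> Sr - Xr" using r1(5) unfolding induced_edges_def by auto
      then show ?thesis using E XS unfolding induced_edges_def by auto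
    qed
  qed
  have hl: "e \<subseteq> Vl" if "e \<in> Ml" for e using that l1(5,1) unfolding induced_edges_def by auto
  have hr: "e \<subseteq> Vr" if "e \<in> Mr" for e using that r1(5,1) unfolding induced_edges_def by auto
  have dj: "\<forall>e\<in>Ml \<union> Mr. \<forall>e'\<in>Ml \<union> Mr. e \<noteq> e' \<longrightarrow> e \<inter> e' = {}"
  proof (intro ballI impI)
    fix e e' assume a: "e \<in> Ml \<union> Mr" "e' \<in> Ml \<union> Mr" "e \<noteq> e'"
    show "e \<inter> e' = {}"
    proof (cases "e \<in> Ml")
      case True
      show ?thesis
      proof (cases "e' \<in> Ml")
        case True2: True
        then show ?thesis using True l1(6) a(3) by blast
      next
        case False
        then have "e' \<in> Mr" using a by simp
        then show ?thesis using hl[OF True] hr d by blast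
      qed
    next
      case False
      then have eR: "e \<in> Mr" using a by simp
      show ?thesis
      proof (cases "e' \<in> Ml")
        case True
        then show ?thesis using hl[OF True] hr[OF eR] d by blast
      next
        case False
        then have "e' \<in> Mr" using a by simp
        then show ?thesis using eR r1(6) a(3) by blast
      qed
    qed
  qed
  have u: "\<Union>(Ml \<union> Mr) = (Sl \<union> Sr) - (Xl \<union> Xr)"
  proof -
    have "\<Union>(Ml \<union> Mr) = (Sl - Xl) \<union> (Sr - Xr)" using l1(7) r1(7) by simp
    also have "\<dots> = (Sl \<union> Sr) - (Xl \<union> Xr)" using l1(1,3) r1(1,3) d by blast
    finally show ?thesis .
  qed
  have s1: "Sl \<union> Sr \<subseteq> Vl \<union> Vr" using l1(1) r1(1) by blast
  have s2: "(Vl \<union> Vr) - (TSl \<union> TSr) \<subseteq> closed_nbhd E (Sl \<union> Sr)" using l1(2) r1(2) c1 by blast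
  have s3: "Xl \<union> Xr \<subseteq> (Sl \<union> Sr) \<inter> (TSl \<union> TSr)" using l1(3) r1(3) by blast
  show ?thesis unfolding feasw_def
    by (intro conjI s1 s2 s3 cx m dj u)
qed

lemma feasw_split:
  assumes f: "feasw (Vl \<union> Vr) (TSl \<union> TSr) (El \<union> Er) k S X M"
    and d: "Vl \<inter> Vr = {}" and fl: "finite Vl" and fr: "finite Vr"
    and el: "\<forall>e\<in>El. e \<subseteq> Vl" and er: "\<forall>e\<in>Er. e \<subseteq> Vr" and tl: "TSl \<subseteq> Vl" and tr: "TSr \<subseteq> Vr"
  shows "feasw Vl TSl El (card (X \<inter> Vl)) (S \<inter> Vl) (X \<inter> Vl) {e\<in>M. e\<in>El}
       \<and> feasw Vr TSr Er (card (X \<inter> Vr)) (S \<inter> Vr) (X \<inter> Vr) {e\<in>M. e\<in>Er}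
       \<and> card (X \<inter> Vl) + card (X \<inter> Vr) = k \<and> card S = card (S \<inter> Vl) + card (S \<inter> Vr)"
proof -
  from f have f1: "S \<subseteq> Vl \<union> Vr" "(Vl \<union> Vr) - (TSl \<union> TSr) \<subseteq> closed_nbhd (El \<union> Er) S"
    "X \<subseteq> S \<inter> (TSl \<union> TSr)" "card X = k"
     "M \<subseteq> induced_edges (El \<union> Er) (S - X)" "(\<forall>e\<in>M. \<forall>e'\<in>M. e \<noteq> e' \<longrightarrow> e \<inter> e' = {})" "\<Union>M = S - X"
    unfolding feasw_def by auto
  have fS: "finite S" using f1(1) fl fr finite_subset by blast
  have fX: "finite X" using f1(3) fS finite_subset by blast
  have cS: "card S = card (S \<inter> Vl) + card (S \<inter> Vr)"
  proof -
    have "S = (S \<inter> Vl) \<union> (S \<inter> Vr)" using f1(1) by blast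
    then have "card S = card ((S \<inter> Vl) \<union> (S \<inter> Vr))" by simp
    also have "\<dots> = card (S \<inter> Vl) + card (S \<inter> Vr)"
      by (rule card_Un_disjoint) (use fS d in auto)
    finally show ?thesis .
  qed
  have cX: "card (X \<inter> Vl) + card (X \<inter> Vr) = k"
  proof -
    have "X = (X \<inter> Vl) \<union> (X \<inter> Vr)" using f1(1,3) by blast
    then have "card X = card ((X \<inter> Vl) \<union> (X \<inter> Vr))" by simp
    also have "\<dots> = card (X \<inter> Vl) + card (X \<inter> Vr)"
      by (rule card_Un_disjoint) (use fX d in auto)
    finally show ?thesis using f1(4) by simp
  qed
  have side: "feasw Va TSa Ea (card (X \<inter> Va)) (S \<inter> Va) (X \<inter> Va) {e\<in>M. e\<in>Ea}"
    if va: "Va \<inter> Vb = {}" and ea: "\<forall>e\<in>Ea. e \<subseteq> Va" and eb: "\<forall>e\<in>Eb. e \<subseteq> Vb"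
      and ta: "TSa \<subseteq> Va" and tb: "TSb \<subseteq> Vb"
      and U: "Vl \<union> Vr = Va \<union> Vb" "TSl \<union> TSr = TSa \<union> TSb" "El \<union> Er = Ea \<union> Eb"
    for Va Vb TSa TSb Ea Eb
  proof -
    have dom: "Va - TSa \<subseteq> closed_nbhd Ea (S \<inter> Va)"
    proof
      fix x assume x: "x \<in> Va - TSa"
      then have "x \<notin> TSb" using tb va by blast
      then have "x \<in> (Va \<union> Vb) - (TSa \<union> TSb)" using x by blast
      then have "x \<in> (Vl \<union> Vr) - (TSl \<union> TSr)" by (simp only: U)
      then have "x \<in> closed_nbhd (El \<union> Er) S" using f1(2) by blast
      then have "x \<in> closed_nbhd (Ea \<union> Eb) S" by (simp only: U)
      then have "x \<in> S \<or> (\<exists>u\<in>S. {u, x} \<in> Ea \<union> Eb)" unfolding closed_nbhd_def by blast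
      then show "x \<in> closed_nbhd Ea (S \<inter> Va)"
      proof
        assume "x \<in> S" then show ?thesis using x unfolding closed_nbhd_def by blast
      next
        assume "\<exists>u\<in>S. {u, x} \<in> Ea \<union> Eb"
        then obtain u where u: "u \<in> S" "{u, x} \<in> Ea \<union> Eb" by blast
        show ?thesis
        proof (cases "{u, x} \<in> Ea")
          case True
          then have "u \<in> Va" using ea by blast
          then show ?thesis using u True unfolding closed_nbhd_def by blast
        next
          case False
          then have "{u,x} \<in> Eb" using u by blast
          then have "x \<in> Vb" using eb by blast
          then show ?thesis using x va by blast
        qed
      qed
    qed
    have xs: "X \<inter> Va \<subseteq> (S \<inter> Va) \<inter> TSa" using f1(3) U tb va by blast
    have ms: "{e\<in>M. e\<in>Ea} \<subseteq> induced_edges Ea (S \<inter> Va - X \<inter> Va)"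
      using f1(5) ea unfolding induced_edges_def by blast
    have un: "\<Union>{e\<in>M. e\<in>Ea} = S \<inter> Va - X \<inter> Va"
    proof
      show "\<Union>{e\<in>M. e\<in>Ea} \<subseteq> S \<inter> Va - X \<inter> Va" using ms unfolding induced_edges_def by blast
    next
      show "S \<inter> Va - X \<inter> Va \<subseteq> \<Union>{e\<in>M. e\<in>Ea}"
      proof
        fix x assume x: "x \<in> S \<inter> Va - X \<inter> Va"
        then have "x \<in> \<Union>M" using f1(7) by blast
        then obtain e where e: "e \<in> M" "x \<in> e" by blast
        then have "e \<in> Ea \<union> Eb" using f1(5) U unfolding induced_edges_def by blast
        moreover have "e \<notin> Eb" using eb e x va by blast
        ultimately show "x \<in> \<Union>{e\<in>M. e\<in>Ea}" using e by blast
      qed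
    qed
    show ?thesis unfolding feasw_def using dom xs ms un f1(6) by blast
  qed
  have A: "feasw Vl TSl El (card (X \<inter> Vl)) (S \<inter> Vl) (X \<inter> Vl) {e\<in>M. e\<in>El}"
    by (rule side[of Vl Vr El Er TSl TSr]) (use d el er tl tr in auto)
  have B: "feasw Vr TSr Er (card (X \<inter> Vr)) (S \<inter> Vr) (X \<inter> Vr) {e\<in>M. e\<in>Er}"
    by (rule side[of Vr Vl Er El TSr TSl]) (use d el er tl tr in auto)
  show ?thesis using A B cX cS by blast
qed

lemma attach_fix:
  assumes f: "feasw V (A \<union> B) E k S X M" and a: "a \<in> A" and AV: "A \<subseteq> V" and BV: "B \<subseteq> V"
    and AB: "\<forall>u\<in>A. \<forall>w\<in>B. {u, w} \<in> E" and dj: "A \<inter> B = {}" and XA: "X \<subseteq> A"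
  shows "\<exists>S' M'. feasw V A E k S' X M'"
proof -
  from f have f1: "S \<subseteq> V" "V - (A \<union> B) \<subseteq> closed_nbhd E S"
    "X \<subseteq> S \<inter> (A \<union> B)" "card X = k"
     "M \<subseteq> induced_edges E (S - X)" "(\<forall>e\<in>M. \<forall>e'\<in>M. e \<noteq> e' \<longrightarrow> e \<inter> e' = {})" "\<Union>M = S - X"
    unfolding feasw_def by auto
  have xs: "X \<subseteq> S \<inter> A" using f1(3) XA by blast
  show ?thesis
  proof (cases "\<exists>a'\<in>S. a' \<in> A")
    case True
    then obtain a' where a': "a' \<in> S" "a' \<in> A" by blast
    have "V - A \<subseteq> closed_nbhd E S"
    proof
      fix x assume x: "x \<in> V - A"
      show "x \<in> closed_nbhd E S"
      proof (cases "x \<in> B")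
        case True then show ?thesis using AB a' unfolding closed_nbhd_def by blast
      next
        case False then show ?thesis using f1(2) x by blast
      qed
    qed
    then have "feasw V A E k S X M" unfolding feasw_def using f1 xs by blast
    then show ?thesis by blast
  next
    case False
    show ?thesis
    proof (cases "B \<subseteq> S")
      case True
      have "V - A \<subseteq> closed_nbhd E S" using f1(2) True unfolding closed_nbhd_def by blast
      then have "feasw V A E k S X M" unfolding feasw_def using f1 xs by blast
      then show ?thesis by blast
    next
      case nb: False
      then obtain b where b: "b \<in> B" "b \<notin> S" by blast
      have aS: "a \<notin> S" using False a by blast
      have ab: "{a, b} \<in> E" using AB a b by blast
      have aX: "a \<notin> X" "b \<notin> X" using aS b f1(3) by auto
      define S' where "S' = S \<union> {a, b}"
      define M' where "M' = insert {a, b} M"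
      have s1: "S' \<subseteq> V" using f1(1) a b AV BV S'_def by blast
      have s2: "V - A \<subseteq> closed_nbhd E S'"
      proof
        fix x assume x: "x \<in> V - A"
        show "x \<in> closed_nbhd E S'"
        proof (cases "x \<in> B")
          case True then show ?thesis using AB a unfolding closed_nbhd_def S'_def by blast
        next
          case False
          then have "x \<in> closed_nbhd E S" using f1(2) x by blast
          then show ?thesis using closed_mono[of E E S S'] S'_def by blast
        qed
      qed
      have s3: "X \<subseteq> S' \<inter> A" using xs S'_def by blast
      have s5: "M' \<subseteq> induced_edges E (S' - X)"
        using f1(5) ab aX unfolding M'_def S'_def induced_edges_def by blast
      have s6: "\<forall>e\<in>M'. \<forall>e'\<in>M'. e \<noteq> e' \<longrightarrow> e \<inter> e' = {}"
      proof -
        have "\<forall>e\<in>M. a \<notin> e \<and> b \<notin> e" using f1(5) aS b unfolding induced_edges_def by blast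
        then show ?thesis using f1(6) unfolding M'_def by blast
      qed
      have s7: "\<Union>M' = S' - X" using f1(7) aX unfolding M'_def S'_def by blast
      have "feasw V A E k S' X M'" unfolding feasw_def using s1 s2 s3 f1(4) s5 s6 s7 by blast
      then show ?thesis by blast
    qed
  qed
qed

lemma exists_feas:
  "distinct_leaves u \<Longrightarrow> k \<le> card (tTS u) \<Longrightarrow> \<exists>S X M. feasw (tV u) (tTS u) (tE u) k S X M"
proof (induction u arbitrary: k)
  case (Leaf x)
  then have "k = 0 \<or> k = 1" by (simp add: le_Suc_eq)
  then show ?case
  proof
    assume "k = 0"
    then have "feasw (tV (Leaf x)) (tTS (Leaf x)) (tE (Leaf x)) k {} {} {}"
      unfolding feasw_def induced_edges_def by auto
    then show ?thesis by blast
  next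
    assume "k = 1"
    then have "feasw (tV (Leaf x)) (tTS (Leaf x)) (tE (Leaf x)) k {x} {x} {}"
      unfolding feasw_def induced_edges_def by auto
    then show ?thesis by blast
  qed
next
  case (Node c l r)
  have dl: "distinct_leaves l" "distinct_leaves r" "tV l \<inter> tV r = {}" using Node.prems by auto
  have ctl: "card (tTS l) + card (tTS r) = card (tTS l \<union> tTS r)"
  proof -
    have "tTS l \<inter> tTS r = {}" using tTS_sub[of l] tTS_sub[of r] dl(3) by blast
    then show ?thesis using card_Un_disjoint[of "tTS l" "tTS r"] finite_subset[OF tTS_sub finite_tV] by metis
  qed
  have twin: "\<exists>S X M. feasw (tV l \<union> tV r) (tTS l \<union> tTS r) E k S X M"
    if "tE l \<union> tE r \<subseteq> E" "k \<le> card (tTS l \<union> tTS r)" for E k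
  proof -
    define kl where "kl = min k (card (tTS l))"
    define kr where "kr = k - kl"
    have "kl \<le> card (tTS l)" "kr \<le> card (tTS r)" using that(2) ctl kl_def kr_def by auto
    then obtain Sl Xl Ml Sr Xr Mr where "feasw (tV l) (tTS l) (tE l) kl Sl Xl Ml"
      "feasw (tV r) (tTS r) (tE r) kr Sr Xr Mr" using Node.IH dl by blast
    from feasw_combine[OF this dl(3) finite_tV finite_tV that(1)]
    show ?thesis using kl_def kr_def by (metis add_diff_inverse_nat min.cobounded1 not_less)
  qed
  show ?case
  proof (cases c)
    case TrueTwin
    then show ?thesis using twin[of "tE (Node c l r)"] Node.prems by auto
  next
    case FalseTwin
    then show ?thesis using twin[of "tE (Node c l r)"] Node.prems by auto
  next
    case Attach
    have kk: "k \<le> card (tTS l)" using Node.prems Attach by simp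
    obtain Sl Xl Ml where l: "feasw (tV l) (tTS l) (tE l) k Sl Xl Ml" using Node.IH dl kk by blast
    obtain Sr Xr Mr where r: "feasw (tV r) (tTS r) (tE r) 0 Sr Xr Mr" using Node.IH dl by blast
    have Xr: "Xr = {}" using r finite_subset[OF _ finite_tV[of r]] unfolding feasw_def by auto
    have EE: "tE l \<union> tE r \<subseteq> tE (Node c l r)" using Attach by auto
    have f: "feasw (tV l \<union> tV r) (tTS l \<union> tTS r) (tE (Node c l r)) k (Sl \<union> Sr) (Xl \<union> Xr) (Ml \<union> Mr)"
      using feasw_combine[OF l r dl(3) finite_tV finite_tV EE] by simp
    obtain a where a: "a \<in> tTS l" using tTS_ne[of l] by blast
    have XA: "Xl \<union> Xr \<subseteq> tTS l" using l Xr unfolding feasw_def by auto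
    have AB: "\<forall>u\<in>tTS l. \<forall>w\<in>tTS r. {u, w} \<in> tE (Node c l r)" using Attach by auto
    have "\<exists>S' M'. feasw (tV l \<union> tV r) (tTS l) (tE (Node c l r)) k S' (Xl \<union> Xr) M'"
      by (rule attach_fix[OF f a _ _ AB _ XA]) (use tTS_sub[of l] tTS_sub[of r] dl(3) in auto)
    then show ?thesis using Attach by auto
  qed
qed

lemma subtree_distinct: "s \<in> subtrees T \<Longrightarrow> distinct_leaves T \<Longrightarrow> distinct_leaves s"
  by (induction T) auto


context
  fixes vl vr :: "'a dtree"
  assumes dl: "distinct_leaves vl" "distinct_leaves vr" "tV vl \<inter> tV vr = {}"
begin

lemma ft_split:
  assumes "k_feasible (Node FalseTwin vl vr) k S"
  shows "\<exists>kl kr Sl Sr. kl + kr = k \<and> kl \<le> card (tTS vl) \<and> kr \<le> card (tTS vr)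
     \<and> k_feasible vl kl Sl \<and> k_feasible vr kr Sr \<and> card S = card Sl + card Sr"
proof -
  obtain X M where f: "feasw (tV vl \<union> tV vr) (tTS vl \<union> tTS vr) (tE vl \<union> tE vr) k S X M"
    using assms unfolding kf_iff by auto
  have sp: "feasw (tV vl) (tTS vl) (tE vl) (card (X \<inter> tV vl)) (S \<inter> tV vl) (X \<inter> tV vl) {e\<in>M. e\<in>tE vl}
       \<and> feasw (tV vr) (tTS vr) (tE vr) (card (X \<inter> tV vr)) (S \<inter> tV vr) (X \<inter> tV vr) {e\<in>M. e\<in>tE vr}
       \<and> card (X \<inter> tV vl) + card (X \<inter> tV vr) = k \<and> card S = card (S \<inter> tV vl) + card (S \<inter> tV vr)"
    by (rule feasw_split[OF f dl(3) finite_tV finite_tV]) (meson tE_sub tTS_sub subsetD)+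
  have c: "card (X \<inter> tV vl) \<le> card (tTS vl)" "card (X \<inter> tV vr) \<le> card (tTS vr)"
    using sp unfolding feasw_def
    by (auto intro!: card_mono finite_subset[OF tTS_sub finite_tV])
  show ?thesis using sp c unfolding kf_iff by blast
qed

lemma ft_combine:
  assumes "k_feasible vl kl Sl" "k_feasible vr kr Sr"
  shows "k_feasible (Node FalseTwin vl vr) (kl + kr) (Sl \<union> Sr) \<and> card (Sl \<union> Sr) = card Sl + card Sr"
proof -
  obtain Xl Ml Xr Mr where l: "feasw (tV vl) (tTS vl) (tE vl) kl Sl Xl Ml"
    and r: "feasw (tV vr) (tTS vr) (tE vr) kr Sr Xr Mr" using assms unfolding kf_iff by blast
  have "feasw (tV vl \<union> tV vr) (tTS vl \<union> tTS vr) (tE (Node FalseTwin vl vr)) (kl+kr) (Sl \<union> Sr) (Xl \<union> Xr) (Ml \<union> Mr)"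
    by (rule feasw_combine[OF l r dl(3) finite_tV finite_tV]) simp
  then have "k_feasible (Node FalseTwin vl vr) (kl + kr) (Sl \<union> Sr)" unfolding kf_iff by auto
  moreover have "card (Sl \<union> Sr) = card Sl + card Sr"
    using l r dl(3) unfolding feasw_def
    by (intro card_Un_disjoint) (auto intro: finite_subset[OF _ finite_tV])
  ultimately show ?thesis by blast
qed

end

lemma hgamma_le: "k_feasible u k S \<Longrightarrow> hgamma u k \<le> card S"
  unfolding hgamma_def by (rule Least_le) blast

lemma hgamma_wit: "distinct_leaves u \<Longrightarrow> k \<le> card (tTS u) \<Longrightarrow> \<exists>S. k_feasible u k S \<and> card S = hgamma u k"
proof -
  assume "distinct_leaves u" "k \<le> card (tTS u)"
  then obtain S0 where "k_feasible u k S0" using exists_feas unfolding kf_iff by blast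
  then have "\<exists>n S. k_feasible u k S \<and> card S = n" by blast
  from LeastI_ex[OF this] show ?thesis unfolding hgamma_def by blast
qed

lemma hmin_props:
  shows "\<And>k. k \<le> card (tTS u) \<Longrightarrow> hmin u \<le> hgamma u k"
    and "halpha u \<le> card (tTS u) \<and> hgamma u (halpha u) = hmin u"
    and "\<And>k. k < halpha u \<Longrightarrow> hmin u < hgamma u k"
proof -
  show 1: "\<And>k. k \<le> card (tTS u) \<Longrightarrow> hmin u \<le> hgamma u k"
    unfolding hmin_def by (rule Min_le) auto
  have "hmin u \<in> hgamma u ` {0..card (tTS u)}" unfolding hmin_def by (rule Min_in) auto
  then have ne: "{k. k \<le> card (tTS u) \<and> hgamma u k = hmin u} \<noteq> {}" by auto
  have fin: "finite {k. k \<le> card (tTS u) \<and> hgamma u k = hmin u}" by simp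
  show "halpha u \<le> card (tTS u) \<and> hgamma u (halpha u) = hmin u"
    using Min_in[OF fin ne] unfolding halpha_def by blast
  show "\<And>k. k < halpha u \<Longrightarrow> hmin u < hgamma u k"
  proof -
    fix k assume k: "k < halpha u"
    have "halpha u \<le> card (tTS u)" using Min_in[OF fin ne] unfolding halpha_def by blast
    then have kn: "k \<le> card (tTS u)" using k by simp
    have "hgamma u k \<noteq> hmin u"
    proof
      assume "hgamma u k = hmin u"
      then have "halpha u \<le> k" unfolding halpha_def using kn by (intro Min_le) auto
      then show False using k by simp
    qed
    then show "hmin u < hgamma u k" using 1[OF kn] by simp
  qed
qed

theorem lemma19:
  fixes T vl vr :: "'a dtree" and V :: "'a set" and E :: "'a set set"
  assumes "distance_hereditary V E"
    and "decomposition_tree T V E"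
    and "Node FalseTwin vl vr \<in> subtrees T"
    and "propP vl" and "propP vr"
  shows "halpha (Node FalseTwin vl vr) = halpha vl + halpha vr"
proof -
  define v where "v = Node FalseTwin vl vr"
  have dv: "distinct_leaves v" using subtree_distinct assms(2,3) unfolding decomposition_tree_def v_def by blast
  then have dl: "distinct_leaves vl" "distinct_leaves vr" "tV vl \<inter> tV vr = {}" unfolding v_def by auto
  have nv: "card (tTS v) = card (tTS vl) + card (tTS vr)"
    unfolding v_def using dl(3) tTS_sub[of vl] tTS_sub[of vr]
    by (simp, intro card_Un_disjoint) (auto intro: finite_subset[OF _ finite_tV])
  define m where "m = hmin vl + hmin vr"
  define a where "a = halpha vl + halpha vr"
  have G1: "m \<le> hgamma v k \<and> (k < a \<longrightarrow> m < hgamma v k)" if k: "k \<le> card (tTS v)" for k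
  proof -
    obtain S where S: "k_feasible v k S" "card S = hgamma v k" using hgamma_wit[OF dv k] by blast
    obtain kl kr Sl Sr where sp: "kl + kr = k" "kl \<le> card (tTS vl)" "kr \<le> card (tTS vr)"
      "k_feasible vl kl Sl" "k_feasible vr kr Sr" "card S = card Sl + card Sr"
      using ft_split[OF dl S(1)[unfolded v_def]] by blast
    have "hgamma vl kl \<le> card Sl" "hgamma vr kr \<le> card Sr" using sp hgamma_le by auto
    moreover have "hmin vl \<le> hgamma vl kl" "hmin vr \<le> hgamma vr kr" using sp hmin_props(1) by auto
    moreover have "k < a \<Longrightarrow> kl < halpha vl \<or> kr < halpha vr" using sp a_def by auto
    moreover have "kl < halpha vl \<Longrightarrow> hmin vl < hgamma vl kl" "kr < halpha vr \<Longrightarrow> hmin vr < hgamma vr kr"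
      using hmin_props(3) by auto
    ultimately show ?thesis using S sp m_def by fastforce
  qed
  have al: "halpha vl \<le> card (tTS vl)" "hgamma vl (halpha vl) = hmin vl"
    and ar: "halpha vr \<le> card (tTS vr)" "hgamma vr (halpha vr) = hmin vr" using hmin_props(2) by auto
  have an: "a \<le> card (tTS v)" using al ar nv a_def by simp
  have G2: "hgamma v a \<le> m"
  proof -
    obtain Sl where l: "k_feasible vl (halpha vl) Sl" "card Sl = hmin vl" using hgamma_wit[OF dl(1) al(1)] al(2) by auto
    obtain Sr where r: "k_feasible vr (halpha vr) Sr" "card Sr = hmin vr" using hgamma_wit[OF dl(2) ar(1)] ar(2) by auto
    from ft_combine[OF dl l(1) r(1)] have "k_feasible v a (Sl \<union> Sr)" "card (Sl \<union> Sr) = m"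
      using l r unfolding v_def a_def m_def by auto
    then show ?thesis using hgamma_le by metis
  qed
  have ga: "hgamma v a = m" using G1[OF an] G2 by simp
  have hm: "hmin v = m"
  proof -
    have "hmin v \<le> hgamma v a" unfolding hmin_def using an by (intro Min_le) auto
    moreover have "hmin v \<in> hgamma v ` {0..card (tTS v)}" unfolding hmin_def by (rule Min_in) auto
    ultimately show ?thesis using G1 ga by fastforce
  qed
  have "halpha v = a"
    unfolding halpha_def hm
  proof (rule Min_eqI)
    show "finite {k. k \<le> card (tTS v) \<and> hgamma v k = m}" by simp
    show "a \<in> {k. k \<le> card (tTS v) \<and> hgamma v k = m}" using an ga by simp
    fix y assume "y \<in> {k. k \<le> card (tTS v) \<and> hgamma v k = m}"
    then have y: "y \<le> card (tTS v)" "hgamma v y = m" by auto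
    show "a \<le> y"
    proof (rule ccontr)
      assume "\<not> a \<le> y"
      then have "y < a" by simp
      then show False using G1[OF y(1)] y(2) by simp
    qed
  qed
  then show ?thesis unfolding v_def a_def .
qed

end
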